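(* Let $\Omega$ be a symmetric oval with $f,g,a,b,\kappa$ as in the context, and define $$A(x)=f(x)-\sqrt{\frac{2}{\kappa(a,0)}(a-x)},\qquad B(y)=g(y)-\sqrt{\frac{2}{\kappa(0,b)}(b-y)}.$$ Then $A'(x)=O(\sqrt{a-x})$ as $x\nearrow a$, and in particular $A'(a)=0$. Moreover $A''(x)=O\big(1/\sqrt{a-x}\big)$ as $x\nearrow a$, and in particular $A''$ is integrable on $(0,a)$. Likewise $B'(b)=0$ and $B''$ is integrable on $(0,b)$.
   Context: A symmetric oval: $\Omega\subset\mathbb{R}^2$ compact convex, with smooth boundary $\partial\Omega$ of nowhere vanishing curvature, symmetric under $(x,y)\mapsto(\pm x,\pm y)$. Let $\partial\Omega$ meet the axes at $(\pm a,0)$ and $(0,\pm b)$, $a,b>0$. Write $\partial\Omega\cap\{y>0\}=\{(x,f(x)):|x|\le a\}$ with $f$ even, smooth, $f(a)=0$, $f(0)=b$, decreasing on $(0,a)$, $f''<0$; and $\partial\Omega\cap\{x>0\}=\{(g(y),y):|y|\le b\}$ where $g$ is even and on $[0,b]$ is the inverse function of $f|_{[0,a]}$. $\kappa(x,y)$ denotes the curvature of $\partial\Omega$ at $(x,y)\in\partial\Omega$. *)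

theory Defs
  imports "HOL-Analysis.Analysis" "HOL-Library.Landau_Symbols"
begin

definition smooth_on :: "real set \<Rightarrow> (real \<Rightarrow> real) \<Rightarrow> bool" where
  "smooth_on S h \<longleftrightarrow> (\<forall>n. \<forall>x\<in>S. ((deriv ^^ n) h) differentiable (at x))"

definition graph_curv :: "(real \<Rightarrow> real) \<Rightarrow> real \<Rightarrow> real" where
  "graph_curv h t = \<bar>deriv (deriv h) t\<bar> / (1 + (deriv h t)\<^sup>2) powr (3/2)"

text \<open>A symmetric oval, described by its boundary functions f (upper arc y = f x)
  and g (right arc x = g y) with axis intercepts a, b, as in the paper's setup.\<close>
definition symmetric_oval :: "(real \<Rightarrow> real) \<Rightarrow> (real \<Rightarrow> real) \<Rightarrow> real \<Rightarrow> real \<Rightarrow> bool" where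
  "symmetric_oval f g a b \<longleftrightarrow>
     0 < a \<and> 0 < b \<and>
     (\<forall>x\<in>{-a..a}. f (-x) = f x) \<and>
     (\<forall>y\<in>{-b..b}. g (-y) = g y) \<and>
     continuous_on {-a..a} f \<and> continuous_on {-b..b} g \<and>
     f a = 0 \<and> f 0 = b \<and>
     (\<forall>x y. 0 \<le> x \<and> x < y \<and> y \<le> a \<longrightarrow> f y < f x) \<and>
     (\<forall>x\<in>{0..a}. g (f x) = x) \<and>
     (\<forall>y\<in>{0..b}. g y \<in> {0..a} \<and> f (g y) = y) \<and>
     smooth_on {-a<..<a} f \<and> smooth_on {-b<..<b} g \<and>
     (\<forall>x\<in>{-a<..<a}. deriv (deriv f) x < 0) \<and>
     (\<forall>y\<in>{-b<..<b}. deriv (deriv g) y < 0)"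

definition kappa_a0 :: "(real \<Rightarrow> real) \<Rightarrow> real" where
  "kappa_a0 g = graph_curv g 0"
definition kappa_0b :: "(real \<Rightarrow> real) \<Rightarrow> real" where
  "kappa_0b f = graph_curv f 0"

end

theory Submission
  imports Defs
begin


lemma smooth_DERIV:
  assumes "smooth_on S h" "x \<in> S"
  shows "((deriv^^n) h has_real_derivative (deriv^^(Suc n)) h x) (at x)"
proof -
  have "((deriv^^n) h) differentiable (at x)" using assms unfolding smooth_on_def by blast
  then show ?thesis by (simp add: DERIV_deriv_iff_real_differentiable)
qed

lemma smooth_isCont:
  assumes "smooth_on S h" "x \<in> S"
  shows "isCont ((deriv^^n) h) x"
  using smooth_DERIV[OF assms] DERIV_isCont by blast

lemma deriv_parity:
  fixes h :: "real \<Rightarrow> real"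
  assumes par: "\<forall>x\<in>{-r<..<r}. h (-x) = s * h x"
    and dif: "\<forall>x\<in>{-r<..<r}. (h has_real_derivative h' x) (at x)"
    and x: "x \<in> {-r<..<r}"
  shows "h' (-x) = - s * h' x"
proof -
  have mx: "-x \<in> {-r<..<r}" using x by auto
  have d1: "((\<lambda>t. h (-t)) has_real_derivative (h' (-x) * (-1))) (at x)"
  proof -
    have "((\<lambda>t. -t) has_real_derivative (-1)) (at x)" by (auto intro!: derivative_eq_intros)
    from DERIV_chain2[OF dif[rule_format, OF mx] this] show ?thesis by simp
  qed
  have d2: "((\<lambda>t. s * h t) has_real_derivative s * h' x) (at x)"
    using dif x by (auto intro!: derivative_eq_intros)
  have d3: "((\<lambda>t. s * h t) has_real_derivative (h' (-x) * (-1))) (at x)"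
    by (rule has_field_derivative_transform_within_open[OF d1, of "{-r<..<r}"]) (use x par in auto)
  from DERIV_unique[OF d2 d3] show ?thesis by simp
qed

lemma mvt_bound:
  fixes h h' :: "real \<Rightarrow> real"
  assumes "0 < d" "h 0 = 0" "0 \<le> K"
    and der: "\<forall>t\<in>{0..<d}. (h has_real_derivative h' t) (at t)"
    and bd: "\<forall>t\<in>{0<..<d}. \<bar>h' t\<bar> \<le> K * t^n"
    and t: "t \<in> {0..<d}"
  shows "\<bar>h t\<bar> \<le> K * t^(Suc n)"
proof (cases "t = 0")
  case True then show ?thesis using assms by simp
next
  case False
  then have t0: "0 < t" using t by auto
  have "\<And>x. 0 \<le> x \<Longrightarrow> x \<le> t \<Longrightarrow> (h has_real_derivative h' x) (at x)"
    using der t by auto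
  from MVT2[OF t0 this] obtain z where z: "0 < z" "z < t" "h t - h 0 = (t - 0) * h' z" by auto
  have "\<bar>h' z\<bar> \<le> K * z^n" using bd z t by auto
  also have "\<dots> \<le> K * t^n" using z \<open>0 \<le> K\<close> by (intro mult_left_mono power_mono) auto
  finally have "\<bar>h t\<bar> \<le> t * (K * t^n)" using z t0 assms(2) by (simp add: abs_mult)
  then show ?thesis by (simp add: algebra_simps)
qed

lemma taylor_even:
  fixes g :: "real \<Rightarrow> real"
  assumes b: "0 < b" and sm: "smooth_on {-b<..<b} g" and ev: "\<forall>y\<in>{-b<..<b}. g (-y) = g y"
  shows "deriv g 0 = 0 \<and> (\<exists>d K. 0 < d \<and> d < b \<and> 0 \<le> K \<and>
    (\<forall>y\<in>{0<..<d}. \<bar>deriv g y - deriv (deriv g) 0 * y\<bar> \<le> K * y^3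
       \<and> \<bar>g y - g 0 - deriv (deriv g) 0 / 2 * y^2\<bar> \<le> K * y^4
       \<and> \<bar>deriv (deriv g) y - deriv (deriv g) 0\<bar> \<le> K * y^2))"
proof -
  define D where "D n = (deriv^^n) g" for n
  have D0: "D 0 = g" and D1: "D 1 = deriv g" and D2: "D 2 = deriv (deriv g)"
    by (simp_all add: D_def numeral_2_eq_2)
  have dD: "\<And>n x. x \<in> {-b<..<b} \<Longrightarrow> (D n has_real_derivative D (Suc n) x) (at x)"
    unfolding D_def by (rule smooth_DERIV[OF sm])
  have z: "0 \<in> {-b<..<b}" using b by auto
  have p0: "\<forall>x\<in>{-b<..<b}. D 0 (-x) = 1 * D 0 x" using ev D0 by simp
  have p1: "\<forall>x\<in>{-b<..<b}. D 1 (-x) = (-1) * D 1 x"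
  proof
    fix x assume x: "x \<in> {-b<..<b}"
    have "D (Suc 0) (-x) = - 1 * D (Suc 0) x"
      by (rule deriv_parity[OF p0 _ x]) (use dD in blast)
    then show "D 1 (-x) = (-1) * D 1 x" by simp
  qed
  have p2: "\<forall>x\<in>{-b<..<b}. D 2 (-x) = 1 * D 2 x"
  proof
    fix x assume x: "x \<in> {-b<..<b}"
    have "D (Suc 1) (-x) = - (-1) * D (Suc 1) x"
      by (rule deriv_parity[OF p1 _ x]) (use dD in blast)
    then show "D 2 (-x) = 1 * D 2 x" by (simp add: numeral_2_eq_2)
  qed
  have p3: "\<forall>x\<in>{-b<..<b}. D 3 (-x) = (-1) * D 3 x"
  proof
    fix x assume x: "x \<in> {-b<..<b}"
    have "D (Suc 2) (-x) = - 1 * D (Suc 2) x"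
      by (rule deriv_parity[OF p2 _ x]) (use dD in blast)
    then show "D 3 (-x) = (-1) * D 3 x" by (simp add: numeral_3_eq_3)
  qed
  have D10: "D 1 0 = 0" using p1 z by force
  have D30: "D 3 0 = 0" using p3 z by force
  define d where "d = b / 2"
  have d: "0 < d" "d < b" using b by (auto simp: d_def)
  have sub: "{0..d} \<subseteq> {-b<..<b}" using d by auto
  have cont: "continuous_on {0..d} (\<lambda>t. \<bar>D 4 t\<bar>)"
  proof (intro continuous_at_imp_continuous_on ballI)
    fix x assume "x \<in> {0..d}"
    then have "isCont (D 4) x" using sub dD[of x 4] DERIV_isCont by blast
    then show "isCont (\<lambda>t. \<bar>D 4 t\<bar>) x" by (intro continuous_intros)
  qed
  obtain m where m: "m \<in> {0..d}" "\<forall>t\<in>{0..d}. \<bar>D 4 t\<bar> \<le> \<bar>D 4 m\<bar>"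
    using continuous_attains_sup[OF compact_Icc _ cont] d by auto
  define K where "K = \<bar>D 4 m\<bar>"
  have K: "0 \<le> K" by (simp add: K_def)
  have der: "\<And>n t. t \<in> {0..<d} \<Longrightarrow> (D n has_real_derivative D (Suc n) t) (at t)"
  proof -
    fix n t assume "t \<in> {0..<d}"
    then have "t \<in> {-b<..<b}" using d by auto
    then show "(D n has_real_derivative D (Suc n) t) (at t)" by (rule dD)
  qed
  have s3: "\<forall>t\<in>{0..<d}. \<bar>D 3 t\<bar> \<le> K * t^1"
  proof
    fix t assume t: "t \<in> {0..<d}"
    have a1: "\<forall>t\<in>{0..<d}. (D 3 has_real_derivative D 4 t) (at t)"
      using der[of _ 3] by (simp add: numeral_eq_Suc)
    have a2: "\<forall>t\<in>{0<..<d}. \<bar>D 4 t\<bar> \<le> K * t^0" using m K_def by auto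
    show "\<bar>D 3 t\<bar> \<le> K * t^1" using mvt_bound[OF d(1) D30 K a1 a2 t] by simp
  qed
  have s2: "\<forall>t\<in>{0..<d}. \<bar>D 2 t - D 2 0\<bar> \<le> K * t^2"
  proof
    fix t assume t: "t \<in> {0..<d}"
    have a1: "\<forall>t\<in>{0..<d}. ((\<lambda>t. D 2 t - D 2 0) has_real_derivative D 3 t) (at t)"
      using der[of _ 2] by (auto intro!: derivative_eq_intros simp: numeral_eq_Suc)
    have a2: "\<forall>t\<in>{0<..<d}. \<bar>D 3 t\<bar> \<le> K * t^1" using s3 by auto
    show "\<bar>D 2 t - D 2 0\<bar> \<le> K * t^2" using mvt_bound[OF d(1) _ K a1 a2 t] by (simp add: numeral_2_eq_2)
  qed
  have s1: "\<forall>t\<in>{0..<d}. \<bar>D 1 t - D 2 0 * t\<bar> \<le> K * t^3"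
  proof
    fix t assume t: "t \<in> {0..<d}"
    have a1: "\<forall>t\<in>{0..<d}. ((\<lambda>t. D 1 t - D 2 0 * t) has_real_derivative D 2 t - D 2 0) (at t)"
      using der[of _ 1] by (auto intro!: derivative_eq_intros simp: numeral_eq_Suc)
    have a2: "\<forall>t\<in>{0<..<d}. \<bar>D 2 t - D 2 0\<bar> \<le> K * t^2" using s2 by auto
    show "\<bar>D 1 t - D 2 0 * t\<bar> \<le> K * t^3" using mvt_bound[OF d(1) _ K a1 a2 t] D10 by (simp add: numeral_3_eq_3)
  qed
  have s0: "\<forall>t\<in>{0..<d}. \<bar>D 0 t - D 0 0 - D 2 0 / 2 * t^2\<bar> \<le> K * t^4"
  proof
    fix t assume t: "t \<in> {0..<d}"
    have a1: "\<forall>t\<in>{0..<d}. ((\<lambda>t. D 0 t - D 0 0 - D 2 0 / 2 * t^2) has_real_derivative D 1 t - D 2 0 * t) (at t)"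
      using der[of _ 0] by (auto intro!: derivative_eq_intros simp: numeral_eq_Suc)
    have a2: "\<forall>t\<in>{0<..<d}. \<bar>D 1 t - D 2 0 * t\<bar> \<le> K * t^3" using s1 by auto
    show "\<bar>D 0 t - D 0 0 - D 2 0 / 2 * t^2\<bar> \<le> K * t^4" using mvt_bound[OF d(1) _ K a1 a2 t] by (simp add: numeral_eq_Suc)
  qed
  show ?thesis
    using D10 s0 s1 s2 d K unfolding D0 D1 D2 by (intro conjI exI[of _ d] exI[of _ K]) auto
qed



lemma abs_div_le:
  fixes n d B L :: real
  assumes "\<bar>n\<bar> \<le> B" "L \<le> \<bar>d\<bar>" "0 < L"
  shows "\<bar>n / d\<bar> \<le> B / L"
proof -
  have "\<bar>n / d\<bar> = \<bar>n\<bar> / \<bar>d\<bar>" by (simp add: abs_divide)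
  also have "\<dots> \<le> B / \<bar>d\<bar>" using assms by (intro divide_right_mono) auto
  also have "\<dots> \<le> B / L" using assms by (intro divide_left_mono) (auto intro: order_trans[OF abs_ge_zero])
  finally show ?thesis .
qed

lemma alg_core:
  fixes k K c y g1 g2 x a :: real
  assumes k: "0 < k" and K: "0 \<le> K" and ck: "c * k = 2" and y: "0 < y"
    and e1: "\<bar>g1 + k * y\<bar> \<le> K * y^3"
    and e0: "\<bar>x - a + k / 2 * y^2\<bar> \<le> K * y^4"
    and e2: "\<bar>g2 + k\<bar> \<le> K * y^2"
    and sk: "K * y^2 \<le> k / 4" and sc: "c * K * y^2 \<le> 1/2"
  defines "S \<equiv> sqrt (c * (a - x))"
  shows "0 < a - x" "y / 2 \<le> S" "S \<le> 2 * y" "\<bar>y - S\<bar> \<le> c * K * y^3"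
    "\<bar>inverse g1 + c / (2 * S)\<bar> \<le> 12 * K / k^2 * y"
    "\<bar>- g2 / g1^3 + c^2 / (4 * S^3)\<bar> \<le> 2000 * K / k^3 / y"
proof -
  have c_eq: "c = 2 / k" using ck k by (simp add: field_simps)
  have c: "0 < c" using k by (simp add: c_eq)
  define E0 where "E0 = x - a + k / 2 * y^2"
  define E1 where "E1 = g1 + k * y"
  define E2 where "E2 = g2 + k"
  define Q where "Q = c * (a - x)"
  have Qe: "Q = y^2 - c * E0" unfolding Q_def E0_def c_eq using k by (simp add: field_simps)
  have cE0: "\<bar>c * E0\<bar> \<le> y^2 / 2"
  proof -
    have "\<bar>c * E0\<bar> = c * \<bar>E0\<bar>" using c by (simp add: abs_mult)
    also have "\<dots> \<le> c * (K * y^4)" using e0 c unfolding E0_def by (intro mult_left_mono) auto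
    also have "\<dots> = (c * K * y^2) * y^2" by (simp add: power_def algebra_simps numeral_eq_Suc)
    also have "\<dots> \<le> (1/2) * y^2" using sc by (intro mult_right_mono) auto
    finally show ?thesis by simp
  qed
  have cE0': "\<bar>c * E0\<bar> \<le> c * K * y^4"
  proof -
    have "\<bar>c * E0\<bar> = c * \<bar>E0\<bar>" using c by (simp add: abs_mult)
    also have "\<dots> \<le> c * (K * y^4)" using e0 c unfolding E0_def by (intro mult_left_mono) auto
    finally show ?thesis by simp
  qed
  have Q1: "y^2 / 2 \<le> Q" and Q2: "Q \<le> 3/2 * y^2" using Qe cE0 by auto
  have y2: "0 < y^2" using y by simp
  have Qp: "0 < Q" using Q1 y2 by linarith
  show ax: "0 < a - x" using Qp c unfolding Q_def by (simp add: zero_less_mult_iff)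
  have SQ: "S = sqrt Q" unfolding S_def Q_def ..
  have S2: "S^2 = Q" using SQ Qp by simp
  have "(y/2)^2 = y^2/4" by (simp add: power_divide)
  then have "(y/2)^2 \<le> Q" using Q1 y2 by linarith
  then show Sl: "y / 2 \<le> S" unfolding SQ by (rule real_le_rsqrt)
  have "(2*y)^2 = 4 * y^2" by (simp add: power_mult_distrib)
  then have "Q \<le> (2*y)^2" using Q2 y2 by linarith
  then have "sqrt Q \<le> sqrt ((2*y)^2)" by (rule real_sqrt_le_mono)
  moreover have "sqrt ((2*y)^2) = 2*y" using y by (subst real_sqrt_abs) simp
  ultimately show Su: "S \<le> 2 * y" using SQ by linarith
  have Sp: "0 < S" using Sl y by linarith
  have yS: "\<bar>y - S\<bar> \<le> c * K * y^3"
  proof -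
    have "(y - S) * (y + S) = c * E0" using S2 Qe by (simp add: algebra_simps power2_eq_square)
    then have "\<bar>y - S\<bar> * (y + S) = \<bar>c * E0\<bar>" using Sp y by (metis abs_mult abs_of_pos add_pos_pos)
    then have "\<bar>y - S\<bar> * y \<le> c * K * y^4" using cE0' Sp
      by (smt (verit) abs_ge_zero mult_left_mono)
    then have "\<bar>y - S\<bar> * y \<le> (c * K * y^3) * y" by (simp add: power_def numeral_eq_Suc algebra_simps)
    then show ?thesis using y by simp
  qed
  then show "\<bar>y - S\<bar> \<le> c * K * y^3" .
  have aE1: "\<bar>E1\<bar> \<le> K * y^3" using e1 E1_def by simp
  have aE1': "\<bar>E1\<bar> \<le> k * y / 4"
  proof -
    have "K * y^3 = (K * y^2) * y" by (simp add: power_def numeral_eq_Suc algebra_simps)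
    also have "\<dots> \<le> k / 4 * y" using sk y by (intro mult_right_mono) auto
    finally show ?thesis using aE1 by simp
  qed
  have g1l: "3 * k * y / 4 \<le> \<bar>g1\<bar>" using aE1' unfolding E1_def by linarith
  have g1u: "\<bar>g1\<bar> \<le> 2 * k * y" using aE1' k y unfolding E1_def by linarith
  have ky: "0 < k * y" using k y by simp
  have g1nz: "g1 \<noteq> 0" using g1l ky by auto
  have eqd: "inverse g1 + c / (2 * S) = (k * S + g1) / (k * S * g1)"
    unfolding c_eq using k Sp g1nz by (simp add: field_simps)
  have num1: "\<bar>k * S + g1\<bar> \<le> 3 * K * y^3"
  proof -
    have "k * S + g1 = E1 - k * (y - S)" unfolding E1_def by (simp add: algebra_simps)
    then have "\<bar>k * S + g1\<bar> \<le> \<bar>E1\<bar> + k * \<bar>y - S\<bar>"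
      using abs_triangle_ineq4[of E1 "k*(y-S)"] k by (simp add: abs_mult)
    also have "\<dots> \<le> K * y^3 + k * (c * K * y^3)" using aE1 yS k by (intro add_mono mult_left_mono) auto
    also have "\<dots> = 3 * K * y^3" using ck by (simp add: algebra_simps)
    finally show ?thesis .
  qed
  have den1: "k^2 * y^2 / 4 \<le> \<bar>k * S * g1\<bar>"
  proof -
    have "\<bar>k * S * g1\<bar> = k * S * \<bar>g1\<bar>" using k Sp by (simp add: abs_mult)
    moreover have "k * (y/2) * (3 * k * y / 4) \<le> k * S * \<bar>g1\<bar>"
      using Sl g1l k y by (intro mult_mono mult_left_mono) auto
    moreover have "k^2 * y^2 / 4 \<le> k * (y/2) * (3 * k * y / 4)"
      using k y by (simp add: power2_eq_square field_simps mult_pos_pos)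
    ultimately show ?thesis by linarith
  qed
  have "\<bar>inverse g1 + c / (2 * S)\<bar> \<le> 3 * K * y^3 / (k^2 * y^2 / 4)"
    unfolding eqd by (rule abs_div_le[OF num1 den1]) (use k y in simp)
  also have "\<dots> = 12 * K / k^2 * y" using k y by (simp add: field_simps power_def numeral_eq_Suc)
  finally show "\<bar>inverse g1 + c / (2 * S)\<bar> \<le> 12 * K / k^2 * y" .
  have eqd2: "- g2 / g1^3 + c^2 / (4 * S^3) = (- g2 * k^2 * S^3 + g1^3) / (k^2 * S^3 * g1^3)"
    unfolding c_eq using k Sp g1nz by (simp add: field_simps)
  have Neq: "- g2 * k^2 * S^3 + g1^3 = k^3 * ((S - y) * (S^2 + S * y + y^2)) - E2 * k^2 * S^3
      + E1 * (g1^2 - k * y * g1 + k^2 * y^2)"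
    unfolding E1_def E2_def by (simp add: algebra_simps power2_eq_square power3_eq_cube)
  have t1: "\<bar>k^3 * ((S - y) * (S^2 + S * y + y^2))\<bar> \<le> 14 * k^2 * K * y^5"
  proof -
    have h: "\<bar>S^2 + S * y + y^2\<bar> \<le> 7 * y^2"
    proof -
      have "S^2 \<le> (2*y)^2" using Su Sp by (intro power_mono) auto
      then have a1: "S^2 \<le> 4 * y^2" by (simp add: power_mult_distrib)
      have a2: "S * y \<le> 2 * y^2" using Su y by (simp add: power2_eq_square)
      have "0 \<le> S^2 + S * y + y^2" using Sp y by simp
      then show ?thesis using a1 a2 by simp
    qed
    have "\<bar>k^3 * ((S - y) * (S^2 + S * y + y^2))\<bar> = k^3 * (\<bar>y - S\<bar> * \<bar>S^2 + S * y + y^2\<bar>)"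
      using k by (simp add: abs_mult abs_minus_commute)
    also have "\<dots> \<le> k^3 * ((c * K * y^3) * (7 * y^2))"
      using yS h k by (intro mult_left_mono mult_mono) auto
    also have "\<dots> = 7 * (c * k) * k^2 * K * y^5" by (simp add: power_def numeral_eq_Suc algebra_simps)
    also have "\<dots> = 14 * k^2 * K * y^5" using ck by simp
    finally show ?thesis .
  qed
  have t2: "\<bar>E2 * k^2 * S^3\<bar> \<le> 8 * k^2 * K * y^5"
  proof -
    have "S^3 \<le> (2*y)^3" using Su Sp by (intro power_mono) auto
    have "\<bar>E2 * k^2 * S^3\<bar> = \<bar>E2\<bar> * (k^2 * S^3)" using Sp by (simp add: abs_mult)
    also have "\<dots> \<le> (K * y^2) * (k^2 * (2*y)^3)"
      using e2 \<open>S^3 \<le> (2*y)^3\<close> Sp k unfolding E2_def by (intro mult_mono mult_left_mono) auto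
    also have "\<dots> = 8 * k^2 * K * y^5" by (simp add: power_def numeral_eq_Suc algebra_simps)
    finally show ?thesis .
  qed
  have t3: "\<bar>E1 * (g1^2 - k * y * g1 + k^2 * y^2)\<bar> \<le> 7 * k^2 * K * y^5"
  proof -
    have h: "\<bar>g1^2 - k * y * g1 + k^2 * y^2\<bar> \<le> 7 * k^2 * y^2"
    proof -
      have "g1^2 \<le> (2 * k * y)^2" using g1u by (metis abs_ge_zero power2_abs power_mono)
      moreover have "(2*k*y)^2 = 4*(k^2*y^2)" by (simp add: power_mult_distrib)
      moreover have "\<bar>k * y * g1\<bar> \<le> k * y * (2 * k * y)" using g1u ky k y by (simp add: abs_mult mult_left_mono)
      moreover have "k*y*(2*k*y) = 2*(k^2*y^2)" by (simp add: power2_eq_square)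
      moreover have "0 \<le> g1^2" by simp
      moreover have "0 \<le> k^2*y^2" by simp
      ultimately show ?thesis by (simp only: abs_le_iff) linarith
    qed
    have "\<bar>E1 * (g1^2 - k * y * g1 + k^2 * y^2)\<bar> \<le> (K * y^3) * (7 * k^2 * y^2)"
      unfolding abs_mult using aE1 h by (intro mult_mono) auto
    also have "\<dots> = 7 * k^2 * K * y^5" by (simp add: power_def numeral_eq_Suc algebra_simps)
    finally show ?thesis .
  qed
  have num2: "\<bar>- g2 * k^2 * S^3 + g1^3\<bar> \<le> 29 * k^2 * K * y^5"
    unfolding Neq using t1 t2 t3 by linarith
  have den2: "k^5 * y^6 / 64 \<le> \<bar>k^2 * S^3 * g1^3\<bar>"
  proof -
    have "\<bar>k^2 * S^3 * g1^3\<bar> = k^2 * (S^3 * \<bar>g1\<bar>^3)" using Sp by (simp add: abs_mult power_abs)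
    moreover have "(y/2)^3 * (3 * k * y / 4)^3 \<le> S^3 * \<bar>g1\<bar>^3"
      using Sl g1l k y by (intro mult_mono power_mono) auto
    moreover have "k^5 * y^6 / 64 \<le> k^2 * ((y/2)^3 * (3 * k * y / 4)^3)"
      using k y by (simp add: power_def numeral_eq_Suc field_simps)
    ultimately show ?thesis using k by (smt (verit) mult_left_mono zero_le_power2)
  qed
  have "\<bar>- g2 / g1^3 + c^2 / (4 * S^3)\<bar> \<le> 29 * k^2 * K * y^5 / (k^5 * y^6 / 64)"
    unfolding eqd2 by (rule abs_div_le[OF num2 den2]) (use k y in simp)
  also have "\<dots> = 1856 * K / k^3 / y" using k y by (simp add: field_simps power_def numeral_eq_Suc)
  also have "\<dots> \<le> 2000 * K / k^3 / y" using k y K by (simp add: divide_right_mono)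
  finally show "\<bar>- g2 / g1^3 + c^2 / (4 * S^3)\<bar> \<le> 2000 * K / k^3 / y" .
qed



lemma integrable_deriv_Ioo:
  fixes F F' :: "real \<Rightarrow> real"
  assumes pq: "p < q" and cF: "\<forall>x\<in>{p..<q}. isCont F x" and lim: "(F \<longlongrightarrow> L) (at_left q)"
    and dF: "\<forall>x\<in>{p<..<q}. (F has_real_derivative F' x) (at x)"
  shows "F' integrable_on {p<..<q}"
proof -
  define G where "G x = (if x < q then F x else L)" for x
  have evq: "\<And>x. x < q \<Longrightarrow> eventually (\<lambda>t. t < q) (nhds x)"
    by (rule eventually_nhds_in_open[of "{..<q}", simplified]) auto
  have cG: "continuous_on {p..q} G"
  proof (rule continuous_on_IccI[OF _ _ _ pq])
    have "(F \<longlongrightarrow> F p) (at p)" using cF pq by (simp add: isCont_def)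
    then have "(F \<longlongrightarrow> F p) (at_right p)" by (rule tendsto_within_subset) auto
    moreover have "eventually (\<lambda>x. F x = G x) (at_right p)"
      using order_tendstoD(2)[OF tendsto_ident_at pq] by eventually_elim (simp add: G_def)
    ultimately show "(G \<longlongrightarrow> G p) (at_right p)" using pq unfolding G_def[of p]
      by (simp add: Lim_transform_eventually)
  next
    have "eventually (\<lambda>x. F x = G x) (at_left q)"
      unfolding eventually_at_filter by (simp add: G_def)
    then show "(G \<longlongrightarrow> G q) (at_left q)" using lim by (simp add: G_def Lim_transform_eventually)
  next
    fix x assume x: "p < x" "x < q"
    have "(F \<longlongrightarrow> F x) (at x)" using cF x by (simp add: isCont_def)
    moreover have "eventually (\<lambda>t. F t = G t) (at x)"
      using evq[OF x(2)] unfolding eventually_at_filter by eventually_elim (simp add: G_def)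
    ultimately show "(G \<longlongrightarrow> G x) (at x)" using x by (simp add: G_def Lim_transform_eventually)
  qed
  have dG: "(G has_vector_derivative F' x) (at x)" if x: "x \<in> {p<..<q}" for x
  proof -
    have "(G has_real_derivative F' x) (at x)"
      by (rule has_field_derivative_transform_within_open[OF dF[rule_format, OF x], of "{..<q}"])
        (use x in \<open>auto simp: G_def\<close>)
    then show ?thesis by (simp add: has_real_derivative_iff_has_vector_derivative)
  qed
  have "(F' has_integral (G q - G p)) {p..q}"
    by (rule fundamental_theorem_of_calculus_interior[OF _ cG dG]) (use pq in auto)
  then have "F' integrable_on {p..q}" by blast
  then show ?thesis by (simp add: integrable_on_Icc_iff_Ioo)
qed



lemma core:
  fixes f g :: "real \<Rightarrow> real" and a b :: real
  assumes a: "0 < a" and b: "0 < b"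
    and gev: "\<forall>y\<in>{-b..b}. g (-y) = g y"
    and fa: "f a = 0" and f0: "f 0 = b" and fcont: "continuous_on {-a..a} f"
    and fdec: "\<forall>x y. 0 \<le> x \<and> x < y \<and> y \<le> a \<longrightarrow> f y < f x"
    and gf: "\<forall>x\<in>{0..a}. g (f x) = x"
    and smf: "smooth_on {-a<..<a} f" and smg: "smooth_on {-b<..<b} g"
    and g2neg: "\<forall>y\<in>{-b<..<b}. deriv (deriv g) y < 0"
  defines "A \<equiv> (\<lambda>x. f x - sqrt (2 / graph_curv g 0 * (a - x)))"
  shows "(\<lambda>x. deriv A x) \<in> O[at_left a](\<lambda>x. sqrt (a - x))
       \<and> (A has_real_derivative 0) (at_left a)
       \<and> (\<lambda>x. deriv (deriv A) x) \<in> O[at_left a](\<lambda>x. 1 / sqrt (a - x))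
       \<and> (\<lambda>x. deriv (deriv A) x) absolutely_integrable_on {0<..<a}"
proof -
  have gev': "\<forall>y\<in>{-b<..<b}. g (-y) = g y" using gev by auto
  obtain d K where g10: "deriv g 0 = 0" and d: "0 < d" "d < b" and K: "0 \<le> K"
    and tay: "\<forall>y\<in>{0<..<d}. \<bar>deriv g y - deriv (deriv g) 0 * y\<bar> \<le> K * y^3
       \<and> \<bar>g y - g 0 - deriv (deriv g) 0 / 2 * y^2\<bar> \<le> K * y^4
       \<and> \<bar>deriv (deriv g) y - deriv (deriv g) 0\<bar> \<le> K * y^2"
    using taylor_even[OF b smg gev'] by blast
  define k where "k = - deriv (deriv g) 0"
  have k: "0 < k" using g2neg b unfolding k_def by auto
  have kap: "graph_curv g 0 = k" unfolding graph_curv_def g10 k_def using k k_def by simp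
  define c where "c = 2 / k"
  have ck: "c * k = 2" using k by (simp add: c_def)
  have c: "0 < c" using k by (simp add: c_def)
  have Aeq: "A = (\<lambda>x. f x - sqrt (c * (a - x)))" unfolding A_def kap c_def ..
  have ga: "g 0 = a" using gf[rule_format, of a] fa a by simp
  have fx: "0 < f x \<and> f x < b \<and> g (f x) = x" if "0 < x" "x < a" for x
  proof -
    have "f a < f x" using fdec that by auto
    moreover have "f x < f 0" using fdec that by auto
    moreover have "g (f x) = x" using gf that by auto
    ultimately show ?thesis using fa f0 by simp
  qed
  define g1 where "g1 = deriv g"
  define g2 where "g2 = deriv (deriv g)"
  have dg: "(g has_real_derivative g1 y) (at y)" "(g1 has_real_derivative g2 y) (at y)"
    if "y \<in> {-b<..<b}" for y
    using smooth_DERIV[OF smg that, of 0] smooth_DERIV[OF smg that, of 1]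
    by (simp_all add: g1_def g2_def numeral_2_eq_2)
  define f1 where "f1 = deriv f"
  define f2 where "f2 = deriv (deriv f)"
  have df: "(f has_real_derivative f1 x) (at x)" "(f1 has_real_derivative f2 x) (at x)"
    if "x \<in> {-a<..<a}" for x
    using smooth_DERIV[OF smf that, of 0] smooth_DERIV[OF smf that, of 1]
    by (simp_all add: f1_def f2_def numeral_2_eq_2)
  have f1eq: "g1 (f x) * f1 x = 1" if x: "0 < x" "x < a" for x
  proof -
    have fb: "f x \<in> {-b<..<b}" using fx[OF x] by auto
    have x': "x \<in> {-a<..<a}" using x by auto
    have "((\<lambda>t. g (f t)) has_real_derivative g1 (f x) * f1 x) (at x)"
      using DERIV_chain2[OF dg(1)[OF fb] df(1)[OF x']] .
    moreover have "((\<lambda>t. g (f t)) has_real_derivative 1) (at x)"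
      by (rule has_field_derivative_transform_within_open[of "\<lambda>t. t" 1 x "{0<..<a}"])
        (use x gf in \<open>auto intro!: derivative_eq_intros\<close>)
    ultimately show ?thesis by (rule DERIV_unique)
  qed
  have f2eq: "f2 x = - g2 (f x) / (g1 (f x))^3" if x: "0 < x" "x < a" for x
  proof -
    have fb: "f x \<in> {-b<..<b}" using fx[OF x] by auto
    have x': "x \<in> {-a<..<a}" using x by auto
    have nz: "g1 (f x) \<noteq> 0" using f1eq[OF x] by auto
    have d1: "((\<lambda>t. inverse (g1 (f t))) has_real_derivative - (g2 (f x) * f1 x * inverse (g1 (f x) ^ Suc (Suc 0)))) (at x)"
      by (rule DERIV_inverse_fun[OF DERIV_chain2[OF dg(2)[OF fb] df(1)[OF x']] nz])
    have ie: "inverse (g1 (f t)) = f1 t" if "t \<in> {0<..<a}" for t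
      by (rule inverse_unique[OF f1eq]) (use that in auto)
    have xin: "x \<in> {0<..<a}" using x by auto
    have "(f1 has_real_derivative - (g2 (f x) * f1 x * inverse (g1 (f x) ^ Suc (Suc 0)))) (at x)"
      by (rule has_field_derivative_transform_within_open[OF d1 open_greaterThanLessThan xin]) (rule ie)
    from DERIV_unique[OF df(2)[OF x'] this] have "f2 x = - (g2 (f x) * f1 x * inverse (g1 (f x) ^ Suc (Suc 0)))" .
    moreover have "f1 x = inverse (g1 (f x))" using inverse_unique[OF f1eq[OF x]] by simp
    ultimately have "f2 x = - (g2 (f x) * inverse (g1 (f x)) * inverse (g1 (f x) ^ Suc (Suc 0)))" by simp
    also have "\<dots> = - g2 (f x) / (g1 (f x))^3" using nz by (simp add: field_simps power3_eq_cube)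
    finally show ?thesis .
  qed
  define r where "r x = sqrt (c * (a - x))" for x
  define s1 where "s1 x = - (c / 2) * inverse (r x)" for x
  define s2 where "s2 x = - (c^2 / 4) / (r x)^3" for x
  have rpos: "0 < r x" if "x < a" for x using that c by (simp add: r_def)
  have dr: "(r has_real_derivative s1 x) (at x)" if x: "x < a" for x
  proof -
    have u: "0 < c * (a - x)" using x c by simp
    have "((\<lambda>t. sqrt (c * (a - t))) has_real_derivative (inverse (sqrt (c * (a - x))) / 2) * (- c)) (at x)"
    proof -
      have inner: "((\<lambda>t. c * (a - t)) has_real_derivative - c) (at x)"
        by (auto intro!: derivative_eq_intros)
      show ?thesis using DERIV_chain2[OF DERIV_real_sqrt[OF u] inner] by simp
    qed
    then show ?thesis unfolding r_def[abs_def] s1_def r_def by (simp add: field_simps)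
  qed
  have ds1: "(s1 has_real_derivative s2 x) (at x)" if x: "x < a" for x
  proof -
    have "((\<lambda>t. - (c / 2) * inverse (r t)) has_real_derivative - (c / 2) * (- (s1 x * inverse (r x ^ Suc (Suc 0))))) (at x)"
      by (intro DERIV_cmult DERIV_inverse_fun dr x) (use rpos[OF x] in simp)
    moreover have "- (c / 2) * (- (s1 x * inverse (r x ^ Suc (Suc 0)))) = s2 x"
      using rpos[OF x] by (simp add: s1_def s2_def field_simps power3_eq_cube power2_eq_square)
    ultimately show ?thesis unfolding s1_def[abs_def] by simp
  qed
  have Aeq': "A = (\<lambda>x. f x - r x)" unfolding Aeq r_def ..
  have dA: "deriv A x = f1 x - s1 x" if x: "x \<in> {-a<..<a}" for x
    unfolding Aeq' by (rule DERIV_imp_deriv) (use x df dr in \<open>auto intro!: derivative_eq_intros\<close>)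
  have dA2: "deriv (deriv A) x = f2 x - s2 x" if x: "x \<in> {-a<..<a}" for x
  proof -
    have "((\<lambda>t. f1 t - s1 t) has_real_derivative f2 x - s2 x) (at x)"
      using x df dr ds1 by (auto intro!: derivative_eq_intros)
    then have "(deriv A has_real_derivative f2 x - s2 x) (at x)"
      by (rule has_field_derivative_transform_within_open[OF _ open_greaterThanLessThan x]) (simp add: dA)
    then show ?thesis by (rule DERIV_imp_deriv)
  qed
  have dA2': "(deriv A has_real_derivative f2 x - s2 x) (at x)" if x: "x \<in> {-a<..<a}" for x
  proof -
    have "((\<lambda>t. f1 t - s1 t) has_real_derivative f2 x - s2 x) (at x)"
      using x df dr ds1 by (auto intro!: derivative_eq_intros)
    then show "(deriv A has_real_derivative f2 x - s2 x) (at x)"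
      by (rule has_field_derivative_transform_within_open[OF _ open_greaterThanLessThan x]) (simp add: dA)
  qed
  have est: "\<bar>deriv A x\<bar> \<le> 12 * K / k^2 * (2 * r x) \<and> \<bar>deriv (deriv A) x\<bar> \<le> 2000 * K / k^3 * (2 / r x)
     \<and> \<bar>A x\<bar> \<le> c * K * (f x)^3 \<and> (f x)^2 / (4 * c) \<le> a - x \<and> 0 < f x"
    if x: "0 < x" "x < a" and fd: "f x < d" and sk: "K * (f x)^2 \<le> k / 4" and sc: "c * K * (f x)^2 \<le> 1/2" for x
  proof -
    define y where "y = f x"
    have y: "0 < y" "y < d" "g y = x" using fx[OF x] fd by (auto simp: y_def)
    have yb: "y \<in> {-b<..<b}" using y d by auto
    have T: "\<bar>g1 y + k * y\<bar> \<le> K * y^3" "\<bar>x - a + k / 2 * y^2\<bar> \<le> K * y^4" "\<bar>g2 y + k\<bar> \<le> K * y^2"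
      using tay[rule_format, of y] y ga unfolding g1_def g2_def k_def by auto
    note al = alg_core[OF k K ck y(1) T(1) T(2) T(3) sk[folded y_def] sc[folded y_def]]
    have rS: "r x = sqrt (c * (a - x))" by (simp add: r_def)
    have x': "x \<in> {-a<..<a}" using x by auto
    have f1x: "f1 x = inverse (g1 y)" using inverse_unique[OF f1eq[OF x]] by (simp add: y_def)
    have e1: "deriv A x = inverse (g1 y) + c / (2 * r x)"
      unfolding dA[OF x'] f1x s1_def by (simp add: field_simps)
    have e2: "deriv (deriv A) x = - g2 y / (g1 y)^3 + c^2 / (4 * (r x)^3)"
      unfolding dA2[OF x'] f2eq[OF x] s2_def y_def by simp
    have Ax: "A x = y - r x" unfolding Aeq' y_def ..
    have b1: "\<bar>deriv A x\<bar> \<le> 12 * K / k^2 * (2 * r x)"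
    proof -
      have "\<bar>deriv A x\<bar> \<le> 12 * K / k^2 * y" unfolding e1 rS using al(5) .
      also have "\<dots> \<le> 12 * K / k^2 * (2 * r x)" using al(2) K k unfolding rS by (intro mult_left_mono) auto
      finally show ?thesis .
    qed
    have b2: "\<bar>deriv (deriv A) x\<bar> \<le> 2000 * K / k^3 * (2 / r x)"
    proof -
      have rp: "0 < r x" using rpos x by auto
      have "\<bar>deriv (deriv A) x\<bar> \<le> 2000 * K / k^3 / y" unfolding e2 rS using al(6) .
      also have "\<dots> = 2000 * K / k^3 * (1 / y)" by simp
      also have "\<dots> \<le> 2000 * K / k^3 * (2 / r x)"
      proof (intro mult_left_mono)
        show "1 / y \<le> 2 / r x" using al(3) rp y unfolding rS by (simp add: field_simps)
      qed (use K k in auto)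
      finally show ?thesis .
    qed
    have b3: "\<bar>A x\<bar> \<le> c * K * y^3" unfolding Ax rS using al(4) .
    have b4: "y^2 / (4 * c) \<le> a - x"
    proof -
      have "(y/2)^2 \<le> (r x)^2" using al(2) y unfolding rS by (intro power_mono) auto
      also have "(r x)^2 = c * (a - x)" unfolding rS using al(1) c by simp
      finally show ?thesis using c by (simp add: field_simps power_divide)
    qed
    show ?thesis using b1 b2 b3 b4 y by (simp add: y_def)
  qed
  have ftend: "(f \<longlongrightarrow> 0) (at_left a)"
    using continuous_on_Icc_at_leftD[OF fcont] a fa by simp
  have EV: "\<forall>\<^sub>F x in at_left a. 0 < x \<and> x < a \<and> f x < d \<and> K * (f x)^2 \<le> k / 4 \<and> c * K * (f x)^2 \<le> 1/2"
  proof -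
    have e1: "\<forall>\<^sub>F x in at_left a. x \<in> {0<..<a}" by (rule eventually_at_left_real) (use a in simp)
    have e2: "\<forall>\<^sub>F x in at_left a. f x < d" by (rule order_tendstoD(2)[OF ftend d(1)])
    have t3: "((\<lambda>x. K * (f x)^2) \<longlongrightarrow> 0) (at_left a)"
      using tendsto_mult[OF tendsto_const[of K] tendsto_power[OF ftend, of 2]] by simp
    have e3: "\<forall>\<^sub>F x in at_left a. K * (f x)^2 < k / 4" by (rule order_tendstoD(2)[OF t3]) (use k in simp)
    have t4: "((\<lambda>x. c * K * (f x)^2) \<longlongrightarrow> 0) (at_left a)"
      using tendsto_mult[OF tendsto_const[of c] t3] by (simp add: mult.assoc)
    have e4: "\<forall>\<^sub>F x in at_left a. c * K * (f x)^2 < 1/2" by (rule order_tendstoD(2)[OF t4]) simp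
    show ?thesis using e1 e2 e3 e4 by eventually_elim auto
  qed
  have EST: "\<forall>\<^sub>F x in at_left a. \<bar>deriv A x\<bar> \<le> 12 * K / k^2 * (2 * r x) \<and> \<bar>deriv (deriv A) x\<bar> \<le> 2000 * K / k^3 * (2 / r x)
     \<and> \<bar>A x\<bar> \<le> c * K * (f x)^3 \<and> (f x)^2 / (4 * c) \<le> a - x \<and> 0 < f x \<and> 0 < x \<and> x < a"
    using EV by eventually_elim (use est in auto)
  have rsq: "r x = sqrt c * sqrt (a - x)" for x by (simp add: r_def real_sqrt_mult)
  have O1: "(\<lambda>x. deriv A x) \<in> O[at_left a](\<lambda>x. sqrt (a - x))"
  proof (rule bigoI[where c = "24 * K / k^2 * sqrt c"])
    show "\<forall>\<^sub>F x in at_left a. norm (deriv A x) \<le> 24 * K / k^2 * sqrt c * norm (sqrt (a - x))"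
      using EST by eventually_elim (auto simp: rsq)
  qed
  have O2: "(\<lambda>x. deriv (deriv A) x) \<in> O[at_left a](\<lambda>x. 1 / sqrt (a - x))"
  proof (rule bigoI[where c = "4000 * K / k^3 / sqrt c"])
    show "\<forall>\<^sub>F x in at_left a. norm (deriv (deriv A) x) \<le> 4000 * K / k^3 / sqrt c * norm (1 / sqrt (a - x))"
      using EST by eventually_elim (auto simp: rsq)
  qed
  have Aa: "A a = 0" unfolding Aeq' r_def using fa by simp
  have D0: "(A has_real_derivative 0) (at_left a)"
    unfolding has_field_derivative_iff
  proof (rule Lim_null_comparison)
    show "((\<lambda>x. 4 * c^2 * K * f x) \<longlongrightarrow> 0) (at_left a)"
      using tendsto_mult[OF tendsto_const[of "4 * c^2 * K"] ftend] by simp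
    show "\<forall>\<^sub>F x in at_left a. norm ((A x - A a) / (x - a)) \<le> 4 * c^2 * K * f x"
      using EST
    proof eventually_elim
      case (elim x)
      then have fp: "0 < f x" and ax: "0 < a - x" and hA: "\<bar>A x\<bar> \<le> c * K * (f x)^3"
        and hl: "(f x)^2 / (4 * c) \<le> a - x" by auto
      have "norm ((A x - A a) / (x - a)) = \<bar>A x\<bar> / (a - x)" using ax Aa
        by (simp add: abs_divide abs_minus_commute)
      also have "\<dots> \<le> c * K * (f x)^3 / ((f x)^2 / (4 * c))"
        using hA hl ax fp c K by (intro frac_le) auto
      also have "\<dots> = 4 * c^2 * K * f x" using fp c by (simp add: field_simps power_def numeral_eq_Suc)
      finally show ?case .
    qed
  qed
  define M2 where "M2 = 2000 * K / k^3"
  have M2: "0 \<le> M2" using K k by (simp add: M2_def)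
  have rtend: "(r \<longlongrightarrow> 0) (at_left a)"
  proof -
    have "((\<lambda>x. sqrt (c * (a - x))) \<longlongrightarrow> sqrt (c * (a - a))) (at_left a)"
      by (intro tendsto_intros)
    then show ?thesis by (simp add: r_def[abs_def])
  qed
  obtain b0 where b0: "b0 < a" "\<forall>y>b0. y < a \<longrightarrow> \<bar>deriv (deriv A) y\<bar> \<le> M2 * (2 / r y)"
    using EST unfolding eventually_at_left_field M2_def by blast
  define b1 where "b1 = max b0 (a/2)"
  have b1: "0 < b1" "b1 < a" using b0 a by (auto simp: b1_def)
  define q where "q x = f2 x - s2 x" for x
  have qc: "continuous_on {0..b1} (\<lambda>x. \<bar>q x\<bar>)"
  proof (intro continuous_at_imp_continuous_on ballI)
    fix x assume x: "x \<in> {0..b1}"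
    then have x': "x \<in> {-a<..<a}" using b1 by auto
    have "isCont ((deriv^^2) f) x" by (rule smooth_isCont[OF smf x'])
    then have "isCont f2 x" by (simp add: f2_def numeral_2_eq_2)
    moreover have "isCont r x" using DERIV_isCont[OF dr] x' by auto
    moreover have "r x \<noteq> 0" using rpos x' by force
    ultimately show "isCont (\<lambda>x. \<bar>q x\<bar>) x" unfolding q_def s2_def[abs_def]
      by (intro continuous_intros) auto
  qed
  obtain m where m: "m \<in> {0..b1}" "\<forall>x\<in>{0..b1}. \<bar>q x\<bar> \<le> \<bar>q m\<bar>"
    using continuous_attains_sup[OF compact_Icc _ qc] b1 by auto
  define M1 where "M1 = \<bar>q m\<bar>"
  have M1: "0 \<le> M1" by (simp add: M1_def)
  have bound: "norm (deriv (deriv A) x) \<le> M1 + 2 * M2 * inverse (r x)" if x: "x \<in> {0<..<a}" for x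
  proof (cases "x \<le> b1")
    case True
    then have "deriv (deriv A) x = q x" using dA2[of x] x unfolding q_def by auto
    then have "norm (deriv (deriv A) x) \<le> M1" using m True x unfolding M1_def by auto
    moreover have "0 \<le> 2 * M2 * inverse (r x)" using M2 rpos[of x] x by auto
    ultimately show ?thesis by linarith
  next
    case False
    then have "\<bar>deriv (deriv A) x\<bar> \<le> M2 * (2 / r x)" using b0 x unfolding b1_def by auto
    then show ?thesis using M1 by (simp add: divide_inverse)
  qed
  have int1: "(\<lambda>x. deriv (deriv A) x) integrable_on {0<..<a}"
  proof (rule integrable_deriv_Ioo[OF a])
    show "\<forall>x\<in>{0..<a}. isCont (deriv A) x" using dA2' DERIV_isCont a by force
    show "(deriv A \<longlongrightarrow> 0) (at_left a)"
    proof (rule Lim_null_comparison)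
      show "\<forall>\<^sub>F x in at_left a. norm (deriv A x) \<le> 12 * K / k^2 * (2 * r x)" using EST by eventually_elim auto
      show "((\<lambda>x. 12 * K / k^2 * (2 * r x)) \<longlongrightarrow> 0) (at_left a)"
        using tendsto_mult[OF tendsto_const[of "12 * K / k^2 * 2"] rtend] by (simp add: mult.assoc)
    qed
    show "\<forall>x\<in>{0<..<a}. (deriv A has_real_derivative deriv (deriv A) x) (at x)"
      using dA2' dA2 a by force
  qed
  have int2: "(\<lambda>x. M1 + 2 * M2 * inverse (r x)) integrable_on {0<..<a}"
  proof (rule integrable_deriv_Ioo[OF a, where F = "\<lambda>x. M1 * x - 2 * M2 * (2 / c) * r x" and L = "M1 * a"])
    show "\<forall>x\<in>{0..<a}. isCont (\<lambda>x. M1 * x - 2 * M2 * (2 / c) * r x) x"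
      using DERIV_isCont[OF dr] c by (auto intro!: continuous_intros)
    show "((\<lambda>x. M1 * x - 2 * M2 * (2 / c) * r x) \<longlongrightarrow> M1 * a) (at_left a)"
      using tendsto_diff[OF tendsto_mult[OF tendsto_const[of M1] tendsto_ident_at[of a "{..<a}"]]
          tendsto_mult[OF tendsto_const[of "2 * M2 * (2 / c)"] rtend]] by simp
    show "\<forall>x\<in>{0<..<a}. ((\<lambda>x. M1 * x - 2 * M2 * (2 / c) * r x) has_real_derivative M1 + 2 * M2 * inverse (r x)) (at x)"
    proof
      fix x assume x: "x \<in> {0<..<a}"
      have "((\<lambda>x. M1 * x - 2 * M2 * (2 / c) * r x) has_real_derivative M1 * 1 - 2 * M2 * (2 / c) * s1 x) (at x)"
        using dr[of x] x c by (auto intro!: derivative_eq_intros)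
      moreover have "M1 * 1 - 2 * M2 * (2 / c) * s1 x = M1 + 2 * M2 * inverse (r x)"
        using c by (simp add: s1_def field_simps)
      ultimately show "((\<lambda>x. M1 * x - 2 * M2 * (2 / c) * r x) has_real_derivative M1 + 2 * M2 * inverse (r x)) (at x)"
        by (simp only:)
    qed
  qed
  have AI: "(\<lambda>x. deriv (deriv A) x) absolutely_integrable_on {0<..<a}"
    by (rule absolutely_integrable_integrable_bound[OF bound int1 int2])
  show ?thesis using O1 D0 O2 AI by blast
qed


theorem lemma2p2:
  fixes f g :: "real \<Rightarrow> real" and a b :: real
  assumes oval: "symmetric_oval f g a b"
  defines "A \<equiv> (\<lambda>x. f x - sqrt (2 / kappa_a0 g * (a - x)))"
      and "B \<equiv> (\<lambda>y. g y - sqrt (2 / kappa_0b f * (b - y)))"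
  shows "(\<lambda>x. deriv A x) \<in> O[at_left a](\<lambda>x. sqrt (a - x))
       \<and> (A has_real_derivative 0) (at_left a)
       \<and> (\<lambda>x. deriv (deriv A) x) \<in> O[at_left a](\<lambda>x. 1 / sqrt (a - x))
       \<and> (\<lambda>x. deriv (deriv A) x) absolutely_integrable_on {0<..<a}
       \<and> (B has_real_derivative 0) (at_left b)
       \<and> (\<lambda>y. deriv (deriv B) y) absolutely_integrable_on {0<..<b}"
proof -
  note O = oval[unfolded symmetric_oval_def]
  have a: "0 < a" and b: "0 < b" using O by auto
  have fev: "\<forall>x\<in>{-a..a}. f (-x) = f x" and gev: "\<forall>y\<in>{-b..b}. g (-y) = g y" using O by auto
  have fc: "continuous_on {-a..a} f" and gc: "continuous_on {-b..b} g" using O by auto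
  have fa: "f a = 0" and f0: "f 0 = b" using O by auto
  have fdec: "\<forall>x y. 0 \<le> x \<and> x < y \<and> y \<le> a \<longrightarrow> f y < f x" using O by auto
  have gf: "\<forall>x\<in>{0..a}. g (f x) = x" and fg: "\<forall>y\<in>{0..b}. g y \<in> {0..a} \<and> f (g y) = y" using O by auto
  have smf: "smooth_on {-a<..<a} f" and smg: "smooth_on {-b<..<b} g" using O by auto
  have f2: "\<forall>x\<in>{-a<..<a}. deriv (deriv f) x < 0" and g2: "\<forall>y\<in>{-b<..<b}. deriv (deriv g) y < 0"
    using O by auto
  have PA: "(\<lambda>x. deriv A x) \<in> O[at_left a](\<lambda>x. sqrt (a - x))
       \<and> (A has_real_derivative 0) (at_left a)
       \<and> (\<lambda>x. deriv (deriv A) x) \<in> O[at_left a](\<lambda>x. 1 / sqrt (a - x))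
       \<and> (\<lambda>x. deriv (deriv A) x) absolutely_integrable_on {0<..<a}"
    unfolding A_def kappa_a0_def by (rule core[OF a b gev fa f0 fc fdec gf smf smg g2])
  have gb: "g b = 0" using gf[rule_format, of 0] f0 a by simp
  have g0: "g 0 = a" using gf[rule_format, of a] fa a by simp
  have gdec: "\<forall>x y. 0 \<le> x \<and> x < y \<and> y \<le> b \<longrightarrow> g y < g x"
  proof (intro allI impI)
    fix x y assume h: "0 \<le> x \<and> x < y \<and> y \<le> b"
    have gx: "g x \<in> {0..a}" "f (g x) = x" using fg h by auto
    have gy: "g y \<in> {0..a}" "f (g y) = y" using fg h by auto
    show "g y < g x"
    proof (rule ccontr)
      assume "\<not> g y < g x"
      then have "g x < g y \<or> g x = g y" by auto
      then show False
      proof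
        assume "g x < g y"
        then have "f (g y) < f (g x)" using fdec[rule_format, of "g x" "g y"] gx gy by auto
        then show False using gx gy h by simp
      next
        assume "g x = g y"
        then show False using gx gy h by simp
      qed
    qed
  qed
  have fg': "\<forall>y\<in>{0..b}. f (g y) = y" using fg by auto
  have PB: "(\<lambda>x. deriv B x) \<in> O[at_left b](\<lambda>x. sqrt (b - x))
       \<and> (B has_real_derivative 0) (at_left b)
       \<and> (\<lambda>x. deriv (deriv B) x) \<in> O[at_left b](\<lambda>x. 1 / sqrt (b - x))
       \<and> (\<lambda>x. deriv (deriv B) x) absolutely_integrable_on {0<..<b}"
    unfolding B_def kappa_0b_def by (rule core[OF b a fev gb g0 gc gdec fg' smg smf f2])
  show ?thesis using PA PB by blast
qed

end
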